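(* For all integers $n \geq k \geq 1$ and $1 \leq m < n$, under any bi-partition of the input positions between Alice and Bob, $D(\operatorname{SSD}_{n,k,m}) = O(k \log n)$.
   Context: For $\Sigma = \{0,1,\dots,m\}$, $\operatorname{SSD}_{n,k,m} : \Sigma^n \times \Sigma^k \to \{0,1\}$ is $1$ iff $y$ is a subsequence of $x$ (there exist indices $i_1 < \dots < i_k$ with $x_{i_j} = y_j$). A bi-partition assigns each of the $n+k$ characters of $(x,y)$ to Alice or Bob. $D(f)$ is the minimum worst-case number of bits exchanged by a deterministic two-party protocol computing $f$. *)

theory Defs
  imports Complex_Main "HOL-Library.Sublist"
begin

text \<open>Inputs (x,y) with |x| = n, |y| = k are encoded as one list w = x @ y of length n+k;
  position i < n is x_(i+1), position n+j is y_(j+1).\<close>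

definition SSD :: "nat list \<Rightarrow> nat list \<Rightarrow> bool" where
  "SSD x y = subseq y x"

definition ssd_inputs :: "nat \<Rightarrow> nat \<Rightarrow> nat \<Rightarrow> nat list set" where
  "ssd_inputs n k m = {w. length w = n + k \<and> set w \<subseteq> {0..m}}"

definition ssd_fun :: "nat \<Rightarrow> nat list \<Rightarrow> bool" where
  "ssd_fun n w = SSD (take n w) (drop n w)"

text \<open>A node is owned by Alice (True) or Bob (False)
  and sends one bit computed from the whole input; validity demands that it depends only on
  the owner's positions.\<close>

datatype proto = Leaf bool | Node bool "nat list \<Rightarrow> bool" proto proto

fun run :: "proto \<Rightarrow> nat list \<Rightarrow> bool" where
  "run (Leaf b) w = b"
| "run (Node ow g l r) w = (if g w then run l w else run r w)"

fun depth :: "proto \<Rightarrow> nat" where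
  "depth (Leaf b) = 0"
| "depth (Node ow g l r) = Suc (max (depth l) (depth r))"

fun valid_proto :: "nat list set \<Rightarrow> nat set \<Rightarrow> nat set \<Rightarrow> proto \<Rightarrow> bool" where
  "valid_proto X A B (Leaf b) = True"
| "valid_proto X A B (Node ow g l r) =
     ((\<forall>w\<in>X. \<forall>w'\<in>X. (\<forall>i\<in>(if ow then A else B). w ! i = w' ! i) \<longrightarrow> g w = g w')
      \<and> valid_proto X A B l \<and> valid_proto X A B r)"

definition D :: "nat list set \<Rightarrow> nat set \<Rightarrow> nat set \<Rightarrow> (nat list \<Rightarrow> bool) \<Rightarrow> nat" where
  "D X A B f = (LEAST d. \<exists>p. valid_proto X A B p \<and> (\<forall>w\<in>X. run p w = f w) \<and> depth p = d)"

end

theory Submission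
  imports Defs "HOL-Library.Log_Nat"
begin

fun sendp :: "bool \<Rightarrow> (nat list \<Rightarrow> nat) \<Rightarrow> nat \<Rightarrow> (nat \<Rightarrow> proto) \<Rightarrow> proto" where
  "sendp ow h 0 P = P 0"
| "sendp ow h (Suc b) P = Node ow (\<lambda>w. odd (h w))
     (sendp ow (\<lambda>w. h w div 2) b (\<lambda>v. P (2*v+1)))
     (sendp ow (\<lambda>w. h w div 2) b (\<lambda>v. P (2*v)))"

lemma run_sendp: "h w < 2^b \<Longrightarrow> run (sendp ow h b P) w = run (P (h w)) w"
proof (induction b arbitrary: h P)
  case 0
  then show ?case by simp
next
  case (Suc b)
  have "h w div 2 < 2^b" using Suc.prems by auto
  then show ?case using Suc.IH[of "\<lambda>w. h w div 2"]
    by (auto simp: odd_two_times_div_two_succ)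
qed

lemma valid_sendp:
  "(\<forall>w\<in>X. \<forall>w'\<in>X. (\<forall>i\<in>(if ow then A else B). w ! i = w' ! i) \<longrightarrow> h w = h w')
   \<Longrightarrow> (\<forall>v. valid_proto X A B (P v)) \<Longrightarrow> valid_proto X A B (sendp ow h b P)"
proof (induction b arbitrary: h P)
  case 0
  then show ?case by simp
next
  case (Suc b)
  have "\<forall>w\<in>X. \<forall>w'\<in>X. (\<forall>i\<in>(if ow then A else B). w ! i = w' ! i) \<longrightarrow> h w div 2 = h w' div 2"
  proof (intro ballI impI)
    fix w w' assume "w \<in> X" "w' \<in> X" "\<forall>i\<in>(if ow then A else B). w ! i = w' ! i"
    then have "h w = h w'" using Suc.prems(1) by blast
    then show "h w div 2 = h w' div 2" by simp
  qed
  note hd = this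
  have par: "\<forall>w\<in>X. \<forall>w'\<in>X. (\<forall>i\<in>(if ow then A else B). w ! i = w' ! i) \<longrightarrow> odd (h w) = odd (h w')"
  proof (intro ballI impI)
    fix w w' assume "w \<in> X" "w' \<in> X" "\<forall>i\<in>(if ow then A else B). w ! i = w' ! i"
    then have "h w = h w'" using Suc.prems(1) by blast
    then show "odd (h w) = odd (h w')" by simp
  qed
  have v1: "valid_proto X A B (sendp ow (\<lambda>w. h w div 2) b (\<lambda>v. P (2*v+1)))"
    by (rule Suc.IH) (use hd Suc.prems(2) in blast)+
  have v2: "valid_proto X A B (sendp ow (\<lambda>w. h w div 2) b (\<lambda>v. P (2*v)))"
    by (rule Suc.IH) (use hd Suc.prems(2) in blast)+
  show ?case by (simp only: sendp.simps valid_proto.simps) (intro conjI par v1 v2)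
qed

lemma depth_sendp: "(\<forall>v. depth (P v) \<le> d) \<Longrightarrow> depth (sendp ow h b P) \<le> b + d"
proof (induction b arbitrary: h P)
  case 0
  then show ?case by simp
next
  case (Suc b)
  have "depth (sendp ow (\<lambda>w. h w div 2) b (\<lambda>v. P (2*v+1))) \<le> b + d"
    by (rule Suc.IH) (use Suc.prems in blast)
  moreover have "depth (sendp ow (\<lambda>w. h w div 2) b (\<lambda>v. P (2*v))) \<le> b + d"
    by (rule Suc.IH) (use Suc.prems in blast)
  ultimately show ?case by simp
qed

definition fpos :: "nat set \<Rightarrow> nat \<Rightarrow> nat list \<Rightarrow> nat \<Rightarrow> nat \<Rightarrow> nat" where
  "fpos S c w p n = (LEAST i. i = n \<or> (p \<le> i \<and> i < n \<and> i \<in> S \<and> w ! i = c))"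

lemma fpos_le: "fpos S c w p n \<le> n"
  unfolding fpos_def by (rule Least_le) simp

lemma fpos_cong: "(\<forall>i. i < n \<and> i \<in> S \<longrightarrow> w ! i = w' ! i) \<Longrightarrow> fpos S c w p n = fpos S c w' p n"
  unfolding fpos_def by (rule arg_cong[where f=Least]) auto

lemma fpos_prop: "fpos S c w p n = n \<or> (p \<le> fpos S c w p n \<and> fpos S c w p n < n \<and> fpos S c w p n \<in> S \<and> w ! fpos S c w p n = c)"
  unfolding fpos_def by (rule LeastI[of _ n]) simp

lemma fpos_least: "i = n \<or> (p \<le> i \<and> i < n \<and> i \<in> S \<and> w ! i = c) \<Longrightarrow> fpos S c w p n \<le> i"
  unfolding fpos_def by (rule Least_le)

lemma fpos_min:
  assumes "{..<n} \<subseteq> S \<union> T"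
  shows "min (fpos S c w p n) (fpos T c w p n) = fpos UNIV c w p n"
proof -
  have a: "fpos UNIV c w p n \<le> fpos S c w p n"
    using fpos_prop[of S c w p n] by (intro fpos_least) blast
  have b: "fpos UNIV c w p n \<le> fpos T c w p n"
    using fpos_prop[of T c w p n] by (intro fpos_least) blast
  have "fpos S c w p n \<le> fpos UNIV c w p n \<or> fpos T c w p n \<le> fpos UNIV c w p n"
  proof (cases "fpos UNIV c w p n = n")
    case True
    then show ?thesis using fpos_le[of S c w p n] by simp
  next
    case False
    then have h: "p \<le> fpos UNIV c w p n \<and> fpos UNIV c w p n < n \<and> w ! fpos UNIV c w p n = c"
      using fpos_prop[of UNIV c w p n] by simp
    then have "fpos UNIV c w p n \<in> S \<or> fpos UNIV c w p n \<in> T" using assms by auto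
    then show ?thesis
    proof
      assume "fpos UNIV c w p n \<in> S"
      then have "fpos S c w p n \<le> fpos UNIV c w p n" using h by (intro fpos_least) simp
      then show ?thesis by simp
    next
      assume "fpos UNIV c w p n \<in> T"
      then have "fpos T c w p n \<le> fpos UNIV c w p n" using h by (intro fpos_least) simp
      then show ?thesis by simp
    qed
  qed
  then show ?thesis using a b by linarith
qed

lemma greedy:
  assumes "length w \<ge> n" "p \<le> n"
  shows "subseq (c # ys) (drop p (take n w)) =
    (fpos UNIV c w p n < n \<and> subseq ys (drop (Suc (fpos UNIV c w p n)) (take n w)))"
  using assms
proof (induction "n - p" arbitrary: p)
  case 0
  then have pn: "p = n" by simp
  have "fpos UNIV c w p n = n" unfolding fpos_def using pn
    by (intro Least_equality) auto
  then show ?case using pn by simp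
next
  case (Suc d)
  then have pn: "p < n" by simp
  have dr: "drop p (take n w) = w ! p # drop (Suc p) (take n w)"
    using Cons_nth_drop_Suc[of p "take n w"] pn Suc.prems by simp
  show ?case
  proof (cases "w ! p = c")
    case True
    have "fpos UNIV c w p n = p" unfolding fpos_def using True pn
      by (intro Least_equality) auto
    then show ?thesis using dr True pn by simp
  next
    case False
    have "fpos UNIV c w p n = fpos UNIV c w (Suc p) n" unfolding fpos_def
      using False by (intro arg_cong[where f=Least] ext) (auto simp: le_eq_less_or_eq)
    moreover have "subseq (c # ys) (drop (Suc p) (take n w)) =
      (fpos UNIV c w (Suc p) n < n \<and> subseq ys (drop (Suc (fpos UNIV c w (Suc p) n)) (take n w)))"
      by (rule Suc.hyps(1)) (use Suc.hyps(2) Suc.prems pn in auto)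
    moreover have "subseq (c # ys) (drop p (take n w)) = subseq (c # ys) (drop (Suc p) (take n w))"
      unfolding dr using False by simp
    ultimately show ?thesis by simp
  qed
qed

primrec mainp :: "nat \<Rightarrow> nat \<Rightarrow> nat set \<Rightarrow> nat \<Rightarrow> nat \<Rightarrow> nat \<Rightarrow> proto" where
  "mainp n k A L 0 p = Leaf True"
| "mainp n k A L (Suc r) p =
     sendp (n + (k - Suc r) \<in> A) (\<lambda>w. w ! (n + (k - Suc r))) L (\<lambda>c.
     sendp True (\<lambda>w. fpos A c w p n) L (\<lambda>a.
     sendp False (\<lambda>w. fpos (- A) c w p n) L (\<lambda>b.
       if min a b < n then mainp n k A L r (Suc (min a b)) else Leaf False)))"

lemma depth_mainp: "depth (mainp n k A L r p) \<le> 3 * L * r"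
proof (induction r arbitrary: p)
  case 0
  then show ?case by simp
next
  case (Suc r)
  have "\<forall>c a b. depth (if min a b < n then mainp n k A L r (Suc (min a b)) else Leaf False) \<le> 3*L*r"
    using Suc.IH by simp
  note X1 = this
  have X2: "\<forall>c a. depth (sendp False (\<lambda>w. fpos (- A) c w p n) L (\<lambda>b.
       if min a b < n then mainp n k A L r (Suc (min a b)) else Leaf False)) \<le> L + 3*L*r"
    by (intro allI) (rule depth_sendp, use X1 in simp)
  have X3: "\<forall>c. depth (sendp True (\<lambda>w. fpos A c w p n) L (\<lambda>a. sendp False (\<lambda>w. fpos (- A) c w p n) L (\<lambda>b.
       if min a b < n then mainp n k A L r (Suc (min a b)) else Leaf False))) \<le> L + (L + 3*L*r)"
    by (intro allI) (rule depth_sendp, use X2 in simp)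
  have "depth (mainp n k A L (Suc r) p) \<le> L + (L + (L + 3*L*r))"
    by (simp only: mainp.simps) (rule depth_sendp, use X3 in simp)
  then show ?case by simp
qed

lemma valid_mainp:
  assumes "A \<subseteq> {..<n+k}" "r \<le> k"
  shows "valid_proto (ssd_inputs n k m) A ({..<n+k} - A) (mainp n k A L r p)"
  using assms(2)
proof (induction r arbitrary: p)
  case 0
  then show ?case by simp
next
  case (Suc r)
  let ?X = "ssd_inputs n k m" and ?B = "{..<n+k} - A"
  have v3: "\<forall>c a b. valid_proto ?X A ?B (if min a b < n then mainp n k A L r (Suc (min a b)) else Leaf False)"
    using Suc by simp
  have cB: "\<forall>w\<in>?X. \<forall>w'\<in>?X. (\<forall>i\<in>(if False then A else ?B). w ! i = w' ! i) \<longrightarrow> fpos (- A) c w p n = fpos (- A) c w' p n" for c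
    by (auto intro!: fpos_cong)
  have cA: "\<forall>w\<in>?X. \<forall>w'\<in>?X. (\<forall>i\<in>(if True then A else ?B). w ! i = w' ! i) \<longrightarrow> fpos A c w p n = fpos A c w' p n" for c
    by (auto intro!: fpos_cong)
  have cY: "\<forall>w\<in>?X. \<forall>w'\<in>?X. (\<forall>i\<in>(if n + (k - Suc r) \<in> A then A else ?B). w ! i = w' ! i) \<longrightarrow> w ! (n + (k - Suc r)) = w' ! (n + (k - Suc r))"
    using Suc.prems by auto
  have v2: "valid_proto ?X A ?B (sendp False (\<lambda>w. fpos (- A) c w p n) L (\<lambda>b.
       if min a b < n then mainp n k A L r (Suc (min a b)) else Leaf False))" for c a
    by (rule valid_sendp[OF cB]) (rule allI, rule v3[rule_format])
  have v1: "valid_proto ?X A ?B (sendp True (\<lambda>w. fpos A c w p n) L (\<lambda>a.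
     sendp False (\<lambda>w. fpos (- A) c w p n) L (\<lambda>b.
       if min a b < n then mainp n k A L r (Suc (min a b)) else Leaf False)))" for c
    by (rule valid_sendp[OF cA]) (rule allI, rule v2)
  show ?case
    unfolding mainp.simps by (rule valid_sendp[OF cY]) (rule allI, rule v1)
qed

lemma run_mainp:
  assumes "A \<subseteq> {..<n+k}" "w \<in> ssd_inputs n k m" "m < n" "n < 2^L"
  shows "r \<le> k \<Longrightarrow> p \<le> n \<Longrightarrow>
    run (mainp n k A L r p) w = subseq (drop (k - r) (drop n w)) (drop p (take n w))"
proof (induction r arbitrary: p)
  case 0
  then show ?case using assms(2) by (simp add: ssd_inputs_def)
next
  case (Suc r)
  let ?j = "k - Suc r"
  have lw: "length w = n + k" and sw: "set w \<subseteq> {0..m}" using assms(2) by (auto simp: ssd_inputs_def)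
  have jk: "?j < k" using Suc.prems by simp
  define c where "c = w ! (n + ?j)"
  have "c \<in> set w" unfolding c_def using lw jk by simp
  then have cl: "c < 2^L" using sw assms(3,4) by auto
  have al: "fpos A c w p n < 2^L" "fpos (-A) c w p n < 2^L"
    using fpos_le assms(4) le_less_trans by blast+
  have mn: "min (fpos A c w p n) (fpos (-A) c w p n) = fpos UNIV c w p n"
    by (rule fpos_min) auto
  have dy: "drop ?j (drop n w) = c # drop (k - r) (drop n w)"
  proof -
    have e1: "drop n w ! ?j = c" unfolding c_def using lw by simp
    have e2: "Suc ?j = k - r" using Suc.prems by simp
    have "?j < length (drop n w)" using lw jk by simp
    from Cons_nth_drop_Suc[OF this] show ?thesis unfolding e1 e2 by simp
  qed
  have "run (mainp n k A L (Suc r) p) w =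
     (if fpos UNIV c w p n < n then run (mainp n k A L r (Suc (fpos UNIV c w p n))) w else False)"
  proof -
    have cl': "w ! (n + ?j) < 2^L" using cl unfolding c_def .
    have "run (mainp n k A L (Suc r) p) w = run (sendp True (\<lambda>w. fpos A c w p n) L (\<lambda>a.
     sendp False (\<lambda>w. fpos (- A) c w p n) L (\<lambda>b.
       if min a b < n then mainp n k A L r (Suc (min a b)) else Leaf False))) w"
      unfolding mainp.simps c_def by (simp only: run_sendp cl')
    also have "\<dots> = run (sendp False (\<lambda>w. fpos (- A) c w p n) L (\<lambda>b.
       if min (fpos A c w p n) b < n then mainp n k A L r (Suc (min (fpos A c w p n) b)) else Leaf False)) w"
      by (simp only: run_sendp al(1))
    also have "\<dots> = run (if min (fpos A c w p n) (fpos (-A) c w p n) < n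
       then mainp n k A L r (Suc (min (fpos A c w p n) (fpos (-A) c w p n))) else Leaf False) w"
      by (simp only: run_sendp al(2))
    finally show ?thesis unfolding mn by simp
  qed
  also have "\<dots> = (fpos UNIV c w p n < n \<and> subseq (drop (k - r) (drop n w)) (drop (Suc (fpos UNIV c w p n)) (take n w)))"
  proof (cases "fpos UNIV c w p n < n")
    case True
    then have "Suc (fpos UNIV c w p n) \<le> n" by simp
    moreover have "r \<le> k" using Suc.prems by simp
    ultimately show ?thesis using Suc.IH[of "Suc (fpos UNIV c w p n)"] True by simp
  next
    case False
    then show ?thesis by simp
  qed
  also have "\<dots> = subseq (drop ?j (drop n w)) (drop p (take n w))"
    unfolding dy using greedy[of n w p c] lw Suc.prems by simp
  finally show ?case .
qed

theorem mainTheorem10: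
  shows "\<exists>C::real. \<forall>n k m A.
     1 \<le> k \<and> k \<le> n \<and> 1 \<le> m \<and> m < n \<and> A \<subseteq> {..<n+k} \<longrightarrow>
     real (D (ssd_inputs n k m) A ({..<n+k} - A) (ssd_fun n)) \<le> C * real k * log 2 (real n)"
proof (intro exI[of _ 9] allI impI)
  fix n k m :: nat and A :: "nat set"
  assume h: "1 \<le> k \<and> k \<le> n \<and> 1 \<le> m \<and> m < n \<and> A \<subseteq> {..<n+k}"
  define L where "L = ceillog2 n + 1"
  have n2: "n \<ge> 2" using h by auto
  have nL: "n < 2^L"
  proof -
    have "n \<le> 2^ceillog2 n" by (rule le_two_power_ceillog2)
    moreover have "(2::nat)^ceillog2 n < 2^L" unfolding L_def by simp
    ultimately show ?thesis by linarith
  qed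
  have lg: "log 2 (real n) \<ge> 1" using n2 by simp
  have "real (ceillog2 n) < log 2 (real n) + 1" using ceillog2_less_log[of n] n2 by simp
  then have Ll: "real L \<le> 3 * log 2 (real n)" unfolding L_def using lg by simp
  let ?p = "mainp n k A L k 0"
  have "D (ssd_inputs n k m) A ({..<n+k} - A) (ssd_fun n) \<le> depth ?p"
    unfolding D_def
  proof (rule Least_le, intro exI conjI)
    show "valid_proto (ssd_inputs n k m) A ({..<n + k} - A) ?p"
      using valid_mainp h by simp
    show "\<forall>w\<in>ssd_inputs n k m. run ?p w = ssd_fun n w"
      using run_mainp[of A n k _ m L k 0] h nL by (simp add: ssd_fun_def SSD_def)
  qed simp
  also have "\<dots> \<le> 3 * L * k" by (rule depth_mainp)
  finally have "real (D (ssd_inputs n k m) A ({..<n+k} - A) (ssd_fun n)) \<le> 3 * real L * real k"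
    by (metis of_nat_le_iff of_nat_mult of_nat_numeral)
  also have "\<dots> \<le> 3 * (3 * log 2 (real n)) * real k"
    using Ll by (intro mult_right_mono mult_left_mono) auto
  finally show "real (D (ssd_inputs n k m) A ({..<n+k} - A) (ssd_fun n)) \<le> 9 * real k * log 2 (real n)"
    by (simp add: algebra_simps)
qed

end
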